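(* Consider the network model and the LC-NSB algorithm described in the context, with no packet arrivals after time 0. Consider any frame $k'$, consisting of time-slots $p=3k'$, $p+1$, $p+2$. If $\Delta(p)\ge 2$, then under LC-NSB the maximum node queue length at the end of the frame (i.e., after the transmissions of slot $p+2$) is at most $\Delta(p)-2$.
   Context: Network model. $G=(V,E)$ is a finite undirected graph with $n=|V|$ nodes; $L(i)$ denotes the set of links incident to node $i$. Time is slotted, $k=0,1,2,\dots$. $Q_l(k)$ is the number of packets at link $l$ in slot $k$, $Q_i(k)=\sum_{l\in L(i)}Q_l(k)$ is the node queue length, and $\Delta(k)=\max_iQ_i(k)$. A schedule is a matching of $G$ (links pairwise sharing no endpoint); only links with $Q_l(k)>0$ may be scheduled; each scheduled link transmits one packet, which leaves the system. LC-NSB algorithm. Frame $k'$ consists of slots $3k',3k'+1,3k'+2$. $R_i(k)=1$ if node $i$ is an endpoint of a link scheduled in slot $k$, else $0$ ($R_i(k)=0$ for $k<0$). $U_i(k)=R_i(k-1)R_i(k-2)$ if $k=3k'+2$ for some integer $k'$, $U_i(k)=R_i(k-1)$ otherwise. Node $i$ is critical in slot $k$ if $Q_i(k)=\Delta(k)$ and heavy if $Q_i(k)\ge\frac{n-1}{n}\Delta(k)$. In slot $k$, LC-NSB sets $w_i(k)=5-2U_i(k)$ if $i$ is critical, $w_i(k)=4-2U_i(k)$ if $i$ is heavy but not critical, and $w_i(k)=1$ otherwise; it excludes links with $Q_l(k)=0$ and schedules a matching $M$ of the remaining links maximizing $\sum_{i:\,M\cap L(i)\ne\emptyset}w_i(k)$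 (ties broken arbitrarily). *)

theory Defs
  imports Complex_Main
begin

definition graph :: "'v set \<Rightarrow> 'v set set \<Rightarrow> bool" where
  "graph V E \<longleftrightarrow> finite V \<and> (\<forall>e\<in>E. \<exists>u v. e = {u, v} \<and> u \<noteq> v \<and> u \<in> V \<and> v \<in> V)"

definition links_at :: "'v set set \<Rightarrow> 'v \<Rightarrow> 'v set set" where
  "links_at E i = {l \<in> E. i \<in> l}"

definition node_queue :: "'v set set \<Rightarrow> ('v set \<Rightarrow> nat) \<Rightarrow> 'v \<Rightarrow> nat" where
  "node_queue E q i = (\<Sum>l\<in>links_at E i. q l)"

text \<open>Delta = max_i Q_i (0 inserted only to make Max total; nat values are nonnegative).\<close>
definition max_queue :: "'v set \<Rightarrow> 'v set set \<Rightarrow> ('v set \<Rightarrow> nat) \<Rightarrow> nat" where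
  "max_queue V E q = Max (insert 0 (node_queue E q ` V))"

definition matching :: "'v set set \<Rightarrow> 'v set set \<Rightarrow> bool" where
  "matching E M \<longleftrightarrow> M \<subseteq> E \<and> (\<forall>l1\<in>M. \<forall>l2\<in>M. l1 \<noteq> l2 \<longrightarrow> l1 \<inter> l2 = {})"

definition covered :: "'v set set \<Rightarrow> 'v \<Rightarrow> bool" where
  "covered M i \<longleftrightarrow> (\<exists>l\<in>M. i \<in> l)"

text \<open>R_i(k) for integer k, with R_i(k) = 0 for k < 0; sched k is the matching of slot k.\<close>
definition Rind :: "(nat \<Rightarrow> 'v set set) \<Rightarrow> int \<Rightarrow> 'v \<Rightarrow> int" where
  "Rind sched k i = (if k < 0 then 0 else if covered (sched (nat k)) i then 1 else 0)"

definition Uind :: "(nat \<Rightarrow> 'v set set) \<Rightarrow> nat \<Rightarrow> 'v \<Rightarrow> int" where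
  "Uind sched k i =
     (if k mod 3 = 2 then Rind sched (int k - 1) i * Rind sched (int k - 2) i
      else Rind sched (int k - 1) i)"

definition lcnsb_weight ::
  "'v set \<Rightarrow> 'v set set \<Rightarrow> (nat \<Rightarrow> 'v set \<Rightarrow> nat) \<Rightarrow> (nat \<Rightarrow> 'v set set) \<Rightarrow> nat \<Rightarrow> 'v \<Rightarrow> int" where
  "lcnsb_weight V E Q sched k i =
     (let D = max_queue V E (Q k); qi = node_queue E (Q k) i in
      if qi = D then 5 - 2 * Uind sched k i
      else if real (card V) * real qi \<ge> (real (card V) - 1) * real D then 4 - 2 * Uind sched k i
      else 1)"

definition objective :: "'v set \<Rightarrow> ('v \<Rightarrow> int) \<Rightarrow> 'v set set \<Rightarrow> int" where
  "objective V w M = (\<Sum>i\<in>{i\<in>V. covered M i}. w i)"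

text \<open>A run of LC-NSB (no arrivals after time 0): Q k l is the queue of link l in slot k,
  sched k the matching scheduled in slot k; any tie-breaking is allowed.\<close>
definition lcnsb_run ::
  "'v set \<Rightarrow> 'v set set \<Rightarrow> (nat \<Rightarrow> 'v set \<Rightarrow> nat) \<Rightarrow> (nat \<Rightarrow> 'v set set) \<Rightarrow> bool" where
  "lcnsb_run V E Q sched \<longleftrightarrow>
     (\<forall>k. matching E (sched k) \<and> (\<forall>l\<in>sched k. Q k l > 0)
        \<and> (\<forall>M. matching E M \<and> (\<forall>l\<in>M. Q k l > 0) \<longrightarrow>
              objective V (lcnsb_weight V E Q sched k) M \<le> objective V (lcnsb_weight V E Q sched k) (sched k))
        \<and> (\<forall>l. Q (Suc k) l = (if l \<in> sched k then Q k l - 1 else Q k l)))"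

end

theory Submission
  imports Defs
begin

definition validm :: "'v set set \<Rightarrow> ('v set \<Rightarrow> nat) \<Rightarrow> 'v set set \<Rightarrow> bool" where
  "validm E q M \<longleftrightarrow> matching E M \<and> (\<forall>l\<in>M. 0 < q l)"

lemma graph_edge:
  assumes "graph V E" "l \<in> E"
  obtains x y where "l = {x,y}" "x \<noteq> y" "x \<in> V" "y \<in> V"
  using assms unfolding graph_def by blast

lemma graph_finite_V: "graph V E \<Longrightarrow> finite V" unfolding graph_def by blast

lemma graph_sub: "graph V E \<Longrightarrow> l \<in> E \<Longrightarrow> l \<subseteq> V"
  by (erule graph_edge) auto

lemma graph_finite_E:
  assumes "graph V E" shows "finite E"
proof -
  have "E \<subseteq> Pow V" using graph_sub[OF assms] by blast
  thus ?thesis using graph_finite_V[OF assms] by (meson finite_Pow_iff finite_subset)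
qed

lemma edge_ne:
  assumes "graph V E" "{x,y} \<in> E" shows "x \<noteq> y"
proof -
  obtain a b where "{x,y} = {a,b}" "a \<noteq> b" using graph_edge[OF assms] by metis
  thus ?thesis by (metis doubleton_eq_iff)
qed

lemma edge_V:
  assumes "graph V E" "{x,y} \<in> E" shows "x \<in> V" "y \<in> V"
  using graph_sub[OF assms] by auto

lemma matching_sub: "matching E M \<Longrightarrow> l \<in> M \<Longrightarrow> l \<in> E"
  unfolding matching_def by blast

lemma matching_partner_unique:
  assumes "graph V E" "matching E M" "{b,a} \<in> M" "{b,a'} \<in> M"
  shows "a = a'"
proof -
  have "{b,a} \<inter> {b,a'} \<noteq> {}" by simp
  hence "{b,a} = {b,a'}" using assms(2-4) unfolding matching_def by metis
  moreover have "b \<noteq> a" using edge_ne[OF assms(1) matching_sub[OF assms(2,3)]] .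
  ultimately show ?thesis by (metis doubleton_eq_iff)
qed

lemma matching_edge_unique:
  assumes "matching E M" "l \<in> M" "l' \<in> M" "x \<in> l" "x \<in> l'"
  shows "l = l'"
  using assms unfolding matching_def by blast

lemma covered_partner:
  assumes "graph V E" "matching E M" "covered M b"
  obtains a where "{b,a} \<in> M" "a \<noteq> b" "a \<in> V" "b \<in> V"
proof -
  obtain l where l: "l \<in> M" "b \<in> l" using assms(3) unfolding covered_def by blast
  have "l \<in> E" using l assms(2) unfolding matching_def by blast
  then obtain x y where xy: "l = {x,y}" "x \<noteq> y" "x \<in> V" "y \<in> V" using graph_edge assms(1) by blast
  show ?thesis
  proof (cases "b = x")
    case True thus ?thesis using that[of y] xy l by auto
  next
    case False thus ?thesis using that[of x] xy l by (auto simp: insert_commute)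
  qed
qed

lemma matching_disj:
  "matching E M \<Longrightarrow> l1 \<in> M \<Longrightarrow> l2 \<in> M \<Longrightarrow> l1 \<noteq> l2 \<Longrightarrow> l1 \<inter> l2 = {}"
  unfolding matching_def by blast

lemma flip_valid:
  assumes g: "graph V E" and vM: "validm E q M" and nu: "\<not> covered M u"
    and ub: "{u,b} \<in> E" "0 < q {u,b}" and ba: "{b,a} \<in> M"
  shows "validm E q (insert {u,b} (M - {{b,a}}))"
    and "\<And>x. covered (insert {u,b} (M - {{b,a}})) x \<longleftrightarrow> (x = u \<or> (covered M x \<and> x \<noteq> a))"
    and "a \<noteq> u" "b \<noteq> u" "a \<noteq> b" "a \<in> V" "b \<in> V" "u \<in> V"
proof -
  have mM: "matching E M" and pos: "\<forall>l\<in>M. 0 < q l" using vM unfolding validm_def by auto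
  have baE: "{b,a} \<in> E" using matching_sub[OF mM ba] .
  have nuM: "u \<notin> l" if "l \<in> M" for l using nu that unfolding covered_def by blast
  show "a \<noteq> u" using nuM[OF ba] by auto
  show "b \<noteq> u" using edge_ne[OF g ub(1)] by auto
  show "a \<noteq> b" using edge_ne[OF g baE] by auto
  show "a \<in> V" "b \<in> V" using edge_V[OF g baE] by auto
  show "u \<in> V" using edge_V[OF g ub(1)] by auto
  have nb: "b \<notin> l \<and> a \<notin> l" if "l \<in> M" "l \<noteq> {b,a}" for l
  proof -
    have "l \<inter> {b,a} = {}" using matching_disj[OF mM that(1) ba that(2)] .
    thus ?thesis by auto
  qed
  have disj: "l1 \<inter> l2 = {}" if "l1 \<in> insert {u,b} (M - {{b,a}})" "l2 \<in> insert {u,b} (M - {{b,a}})" "l1 \<noteq> l2" for l1 l2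
  proof (cases "l1 = {u,b}")
    case True
    hence "l2 \<in> M" "l2 \<noteq> {b,a}" using that by auto
    hence "u \<notin> l2" "b \<notin> l2" using nb nuM by auto
    thus ?thesis using True by auto
  next
    case False
    hence l1: "l1 \<in> M" "l1 \<noteq> {b,a}" using that by auto
    show ?thesis
    proof (cases "l2 = {u,b}")
      case True
      have "u \<notin> l1" "b \<notin> l1" using nb nuM l1 by auto
      thus ?thesis using True by auto
    next
      case False
      hence "l2 \<in> M" using that by auto
      thus ?thesis using matching_disj[OF mM l1(1) _ that(3)] by auto
    qed
  qed
  have sub: "insert {u,b} (M - {{b,a}}) \<subseteq> E" using ub(1) matching_sub[OF mM] by auto
  have posn: "\<forall>l\<in>insert {u,b} (M - {{b,a}}). 0 < q l" using pos ub(2) by auto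
  show "validm E q (insert {u,b} (M - {{b,a}}))"
    unfolding validm_def matching_def using sub posn disj by blast
  fix x
  show "covered (insert {u,b} (M - {{b,a}})) x \<longleftrightarrow> (x = u \<or> (covered M x \<and> x \<noteq> a))"
  proof
    assume "covered (insert {u,b} (M - {{b,a}})) x"
    then obtain l where l: "l \<in> insert {u,b} (M - {{b,a}})" "x \<in> l" unfolding covered_def by blast
    show "x = u \<or> (covered M x \<and> x \<noteq> a)"
    proof (cases "l = {u,b}")
      case True
      hence "x = u \<or> x = b" using l by auto
      moreover have "covered M b" using ba unfolding covered_def by auto
      ultimately show ?thesis using \<open>a \<noteq> b\<close> by auto
    next
      case False
      hence "l \<in> M" "l \<noteq> {b,a}" using l by auto
      hence "covered M x" "x \<noteq> a" using nb l(2) unfolding covered_def by auto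
      thus ?thesis by auto
    qed
  next
    assume "x = u \<or> (covered M x \<and> x \<noteq> a)"
    thus "covered (insert {u,b} (M - {{b,a}})) x"
    proof
      assume "x = u" thus ?thesis unfolding covered_def by auto
    next
      assume h: "covered M x \<and> x \<noteq> a"
      then obtain l where l: "l \<in> M" "x \<in> l" unfolding covered_def by blast
      show ?thesis
      proof (cases "l = {b,a}")
        case True hence "x = b" using l h by auto
        thus ?thesis unfolding covered_def by auto
      next
        case False
        hence "l \<in> insert {u,b} (M - {{b,a}})" using l by auto
        thus ?thesis using l(2) unfolding covered_def by auto
      qed
    qed
  qed
qed

lemma add_valid:
  assumes g: "graph V E" and vM: "validm E q M" and nu: "\<not> covered M u" "\<not> covered M b"
    and ub: "{u,b} \<in> E" "0 < q {u,b}"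
  shows "validm E q (insert {u,b} M)"
    and "\<And>x. covered (insert {u,b} M) x \<longleftrightarrow> (x = u \<or> x = b \<or> covered M x)"
proof -
  have mM: "matching E M" and pos: "\<forall>l\<in>M. 0 < q l" using vM unfolding validm_def by auto
  have nuM: "u \<notin> l \<and> b \<notin> l" if "l \<in> M" for l using nu that unfolding covered_def by blast
  have disj: "l1 \<inter> l2 = {}" if "l1 \<in> insert {u,b} M" "l2 \<in> insert {u,b} M" "l1 \<noteq> l2" for l1 l2
  proof (cases "l1 = {u,b}")
    case True
    hence "l2 \<in> M" using that by auto
    hence "u \<notin> l2" "b \<notin> l2" using nuM by auto
    thus ?thesis using True by auto
  next
    case False
    hence l1: "l1 \<in> M" using that by auto
    show ?thesis
    proof (cases "l2 = {u,b}")
      case True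
      have "u \<notin> l1" "b \<notin> l1" using nuM l1 by auto
      thus ?thesis using True by auto
    next
      case False
      hence "l2 \<in> M" using that by auto
      thus ?thesis using matching_disj[OF mM l1 _ that(3)] by auto
    qed
  qed
  have sub: "insert {u,b} M \<subseteq> E" using ub(1) matching_sub[OF mM] by auto
  have posn: "\<forall>l\<in>insert {u,b} M. 0 < q l" using pos ub(2) by auto
  show "validm E q (insert {u,b} M)"
    unfolding validm_def matching_def using sub posn disj by blast
  fix x show "covered (insert {u,b} M) x \<longleftrightarrow> (x = u \<or> x = b \<or> covered M x)"
    unfolding covered_def by auto
qed

lemma objective_flip:
  assumes fin: "finite V" and cov: "\<And>x. covered M' x \<longleftrightarrow> (x = u \<or> (covered M x \<and> x \<noteq> a))"
    and "u \<in> V" "a \<in> V" "\<not> covered M u" "covered M a"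
  shows "objective V w M' = objective V w M + w u - w a"
proof -
  have eq: "{i\<in>V. covered M' i} = insert u ({i\<in>V. covered M i} - {a})"
    using cov assms by auto
  have "objective V w M' = w u + sum w ({i\<in>V. covered M i} - {a})"
    unfolding objective_def eq using fin assms by (subst sum.insert) auto
  also have "\<dots> = w u + (sum w {i\<in>V. covered M i} - w a)"
    using fin assms by (subst sum_diff1) auto
  finally show ?thesis unfolding objective_def by simp
qed

lemma objective_add:
  assumes fin: "finite V" and cov: "\<And>x. covered M' x \<longleftrightarrow> (x = u \<or> x = b \<or> covered M x)"
    and "u \<in> V" "b \<in> V" "\<not> covered M u" "\<not> covered M b" "u \<noteq> b"
  shows "objective V w M' = objective V w M + w u + w b"
proof -
  have eq: "{i\<in>V. covered M' i} = insert u (insert b {i\<in>V. covered M i})"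
    using cov assms by auto
  show ?thesis
    unfolding objective_def eq using fin assms by (simp add: sum.insert)
qed



lemma matching_flip:
  assumes g: "graph V E" and mA: "matching E A" and nu: "\<not> covered A u"
    and ub: "{u,b} \<in> E" and ba: "{b,a} \<in> A"
  shows "matching E (insert {u,b} (A - {{b,a}}))"
    and "\<And>x. covered (insert {u,b} (A - {{b,a}})) x \<longleftrightarrow> (x = u \<or> (covered A x \<and> x \<noteq> a))"
proof -
  have v: "validm E (\<lambda>_. 1::nat) A" using mA unfolding validm_def by auto
  show "matching E (insert {u,b} (A - {{b,a}}))"
    using flip_valid(1)[OF g v nu ub(1) _ ba] unfolding validm_def by auto
  fix x show "covered (insert {u,b} (A - {{b,a}})) x \<longleftrightarrow> (x = u \<or> (covered A x \<and> x \<noteq> a))"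
    using flip_valid(2)[OF g v nu ub(1) _ ba] by auto
qed

lemma alt_path_aux:
  assumes g: "graph V E" and mB: "matching E B" and nb: "\<not> covered B b"
  shows "\<And>A a. matching E A \<Longrightarrow> a \<noteq> b \<Longrightarrow> \<not> covered A a \<Longrightarrow> covered B a \<Longrightarrow>
      (\<forall>x. x \<noteq> a \<longrightarrow> x \<noteq> b \<longrightarrow> (covered A x \<longleftrightarrow> covered B x)) \<Longrightarrow>
      card ((A - B) \<union> (B - A)) = n \<Longrightarrow>
      \<exists>(k::nat) (c::nat \<Rightarrow> _). 0 < k \<and> c 0 = a \<and> c (2*k) = b \<and> inj_on c {..2*k} \<and>
        (\<forall>i<k. {c (2*i), c (2*i+1)} \<in> B - A) \<and> (\<forall>i<k. {c (2*i+1), c (2*i+2)} \<in> A - B)"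
proof (induction n rule: less_induct)
  case (less n A a)
  note mA = less.prems(1) and ab = less.prems(2) and na = less.prems(3) and ca = less.prems(4)
    and eqv = less.prems(5) and cardn = less.prems(6)
  obtain z where az: "{a,z} \<in> B" "z \<noteq> a" using covered_partner[OF g mB ca] by metis
  have zb: "z \<noteq> b" using az nb unfolding covered_def by auto
  have czB: "covered B z" using az unfolding covered_def by auto
  have czA: "covered A z" using eqv czB az(2) zb by auto
  obtain y where zy: "{z,y} \<in> A" "y \<noteq> z" using covered_partner[OF g mA czA] by metis
  have azA: "{a,z} \<notin> A" using na unfolding covered_def by auto
  have ya: "y \<noteq> a" using na zy unfolding covered_def by auto
  have zyB: "{z,y} \<notin> B"
  proof
    assume "{z,y} \<in> B"
    moreover have "{z,a} \<in> B" using az(1) by (simp add: insert_commute)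
    ultimately have "y = a" using matching_partner_unique[OF g mB] by metis
    thus False using ya by auto
  qed
  have azE: "{a,z} \<in> E" using matching_sub[OF mB az(1)] .
  have fin: "finite ((A - B) \<union> (B - A))"
    using graph_finite_E[OF g] matching_sub[OF mA] matching_sub[OF mB]
    by (meson Un_least Diff_subset finite_subset subset_iff)
  show ?case
  proof (cases "y = b")
    case True
    define c where "c = (\<lambda>i::nat. if i = 0 then a else if i = 1 then z else b)"
    have "inj_on c {..2*1}"
      unfolding inj_on_def c_def using az(2) zb ab by auto
    moreover have "\<forall>i<1. {c (2*i), c (2*i+1)} \<in> B - A" using az azA unfolding c_def by auto
    moreover have "\<forall>i<1. {c (2*i+1), c (2*i+2)} \<in> A - B" using zy zyB True unfolding c_def by auto
    ultimately show ?thesis unfolding c_def by (intro exI[of _ 1] exI[of _ c]) (auto simp: c_def)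
  next
    case False
    define A' where "A' = insert {a,z} (A - {{z,y}})"
    have mA': "matching E A'" unfolding A'_def using matching_flip(1)[OF g mA na azE zy(1)] .
    have covA': "covered A' x \<longleftrightarrow> (x = a \<or> (covered A x \<and> x \<noteq> y))" for x
      unfolding A'_def using matching_flip(2)[OF g mA na azE zy(1)] .
    have cyA: "covered A y" using zy(1) unfolding covered_def by auto
    have p1: "y \<noteq> b" using False .
    have p2: "\<not> covered A' y" using covA' ya by auto
    have p3: "covered B y" using eqv cyA ya False by auto
    have p4: "\<forall>x. x \<noteq> y \<longrightarrow> x \<noteq> b \<longrightarrow> (covered A' x \<longleftrightarrow> covered B x)"
    proof (intro allI impI)
      fix x assume xy: "x \<noteq> y" and xb: "x \<noteq> b"
      show "covered A' x \<longleftrightarrow> covered B x"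
      proof (cases "x = a")
        case True thus ?thesis using covA' ca by simp
      next
        case False thus ?thesis using covA' eqv xy xb by simp
      qed
    qed
    have symeq: "(A' - B) \<union> (B - A') = ((A - B) \<union> (B - A)) - {{a,z},{z,y}}"
      unfolding A'_def using az(1) azA zy(1) zyB by auto
    have sub: "(A' - B) \<union> (B - A') \<subset> (A - B) \<union> (B - A)"
      unfolding symeq using az(1) azA by auto
    have BA': "B - A' \<subseteq> B - A" unfolding A'_def using zyB by blast
    have AB': "A' - B \<subseteq> A - B" unfolding A'_def using az(1) by blast
    have lt: "card ((A' - B) \<union> (B - A')) < n"
      using psubset_card_mono[OF fin sub] cardn by auto
    obtain k' :: nat and c' :: "nat \<Rightarrow> _" where k': "0 < k'" "c' 0 = y" "c' (2*k') = b" "inj_on c' {..2*k'}"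
      "\<forall>i<k'. {c' (2*i), c' (2*i+1)} \<in> B - A'" "\<forall>i<k'. {c' (2*i+1), c' (2*i+2)} \<in> A' - B"
      using less.IH[OF lt mA' p1 p2 p3 p4 refl] by blast
    define c where "c = (\<lambda>i::nat. if i = 0 then a else if i = 1 then z else c' (i - 2))"
    have onD: "\<exists>e\<in>(A' - B) \<union> (B - A'). c' j \<in> e" if "j \<le> 2*k'" for j
    proof (cases "even j")
      case True
      then obtain i where i: "j = 2*i" by (auto elim: evenE)
      show ?thesis
      proof (cases "i < k'")
        case True thus ?thesis using k'(5) i by blast
      next
        case False
        hence "i = k'" using that i by auto
        then obtain i' where "k' = Suc i'" using k'(1) by (cases k') auto
        hence "{c' (2*i'+1), c' (2*i'+2)} \<in> A' - B" "j = 2*i'+2" using k'(6) \<open>i = k'\<close> i by auto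
        thus ?thesis by blast
      qed
    next
      case False
      then obtain i where i: "j = 2*i+1" by (auto elim: oddE)
      hence "i < k'" using that by auto
      thus ?thesis using k'(5) i by blast
    qed
    have anot: "a \<notin> e" if "e \<in> (A' - B) \<union> (B - A')" for e
    proof
      assume ae: "a \<in> e"
      show False
      proof (cases "e \<in> B")
        case True
        have "e = {a,z}" using matching_disj[OF mB True az(1)] ae by auto
        thus False using that True unfolding A'_def by auto
      next
        case False
        hence "e \<in> A'" using that by auto
        hence "e = {a,z} \<or> e \<in> A" unfolding A'_def by auto
        thus False using False az(1) ae na unfolding covered_def by auto
      qed
    qed
    have znot: "z \<notin> e" if "e \<in> (A' - B) \<union> (B - A')" for e
    proof
      assume ze: "z \<in> e"
      show False
      proof (cases "e \<in> B")
        case True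
        have "e = {a,z}" using matching_disj[OF mB True az(1)] ze by auto
        thus False using that True unfolding A'_def by auto
      next
        case False
        hence "e \<in> A'" using that by auto
        hence "e = {a,z} \<or> (e \<in> A \<and> e \<noteq> {z,y})" unfolding A'_def by auto
        moreover have "e \<in> A \<Longrightarrow> e = {z,y}" using matching_disj[OF mA _ zy(1)] ze by auto
        ultimately show False using False az(1) by auto
      qed
    qed
    have cnot: "c' j \<noteq> a" "c' j \<noteq> z" if "j \<le> 2*k'" for j
      using onD[OF that] anot znot by metis+
    have "0 < Suc k'" by simp
    moreover have "c 0 = a" unfolding c_def by simp
    moreover have "c (2 * Suc k') = b" unfolding c_def using k'(3) by simp
    moreover have "inj_on c {..2 * Suc k'}"
    proof (rule inj_onI)
      fix i j assume i: "i \<in> {..2 * Suc k'}" and j: "j \<in> {..2 * Suc k'}" and eq: "c i = c j"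
      have r: "i - 2 \<le> 2*k'" "j - 2 \<le> 2*k'" using i j by auto
      show "i = j"
      proof (cases "i \<le> 1 \<or> j \<le> 1")
        case True
        thus ?thesis using eq cnot[OF r(1)] cnot[OF r(2)] az(2) unfolding c_def
          by (auto split: if_splits)
      next
        case False
        hence "c' (i-2) = c' (j-2)" using eq unfolding c_def by auto
        hence "i - 2 = j - 2" using k'(4) r by (auto simp: inj_on_def)
        thus ?thesis using False by auto
      qed
    qed
    moreover have "\<forall>i<Suc k'. {c (2*i), c (2*i+1)} \<in> B - A"
    proof (intro allI impI)
      fix i assume "i < Suc k'"
      show "{c (2*i), c (2*i+1)} \<in> B - A"
      proof (cases i)
        case 0 thus ?thesis using az(1) azA unfolding c_def by auto
      next
        case (Suc i')
        hence "i' < k'" using \<open>i < Suc k'\<close> by auto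
        hence "{c' (2*i'), c' (2*i'+1)} \<in> B - A'" using k'(5) by auto
        moreover have "c (2*i) = c' (2*i')" "c (2*i+1) = c' (2*i'+1)" unfolding c_def using Suc by auto
        ultimately show ?thesis using BA' by (metis subsetD)
      qed
    qed
    moreover have "\<forall>i<Suc k'. {c (2*i+1), c (2*i+2)} \<in> A - B"
    proof (intro allI impI)
      fix i assume "i < Suc k'"
      show "{c (2*i+1), c (2*i+2)} \<in> A - B"
      proof (cases i)
        case 0 thus ?thesis using zy(1) zyB k'(2) unfolding c_def by auto
      next
        case (Suc i')
        hence "i' < k'" using \<open>i < Suc k'\<close> by auto
        hence "{c' (2*i'+1), c' (2*i'+2)} \<in> A' - B" using k'(6) by auto
        moreover have "c (2*i+1) = c' (2*i'+1)" "c (2*i+2) = c' (2*i'+2)" unfolding c_def using Suc by auto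
        ultimately show ?thesis using AB' by (metis subsetD)
      qed
    qed
    ultimately show ?thesis by blast
  qed
qed



locale optsetup =
  fixes V :: "'v set" and E :: "'v set set" and q :: "'v set \<Rightarrow> nat" and w :: "'v \<Rightarrow> int"
    and M0 :: "'v set set" and col :: "'v \<Rightarrow> bool" and D :: nat
  assumes g: "graph V E"
    and vM0: "validm E q M0"
    and opt: "\<And>M. validm E q M \<Longrightarrow> objective V w M \<le> objective V w M0"
    and wlo: "\<And>i. i \<in> V \<Longrightarrow> 1 \<le> w i" and whi: "\<And>i. i \<in> V \<Longrightarrow> w i \<le> 5"
    and Tq: "\<And>i. i \<in> V \<Longrightarrow> w i = 5 \<Longrightarrow> node_queue E q i = D"
    and Dmax: "\<And>i. i \<in> V \<Longrightarrow> node_queue E q i \<le> D"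
    and Dpos: "1 \<le> D"
    and colr: "\<And>x y. x \<in> V \<Longrightarrow> y \<in> V \<Longrightarrow> w x = 5 \<Longrightarrow> w y = 5 \<Longrightarrow> {x,y} \<in> E \<Longrightarrow> 0 < q {x,y}
                \<Longrightarrow> col x \<noteq> col y"

locale badsetup = optsetup +
  fixes v :: 'v
  assumes vV: "v \<in> V" and wv: "w v = 5" and nv: "\<not> covered M0 v"
begin

inductive reach :: "'v set set \<Rightarrow> 'v \<Rightarrow> bool" where
  base: "reach M0 v"
| step: "reach M u \<Longrightarrow> {u,b} \<in> E \<Longrightarrow> 0 < q {u,b} \<Longrightarrow> {b,a} \<in> M
          \<Longrightarrow> reach (insert {u,b} (M - {{b,a}})) a"

lemma finV: "finite V" using graph_finite_V[OF g] .

lemma reach_inv: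
  assumes "reach M u"
  shows "validm E q M \<and> u \<in> V \<and> \<not> covered M u \<and> w u = 5 \<and> objective V w M = objective V w M0
     \<and> (u = v \<or> covered M0 u) \<and> (\<forall>x. x \<noteq> u \<longrightarrow> (covered M x \<longleftrightarrow> (x = v \<or> covered M0 x)))"
  using assms
proof (induction rule: reach.induct)
  case base
  show ?case using vM0 vV wv nv by auto
next
  case (step M u b a)
  have vM: "validm E q M" and nuc: "\<not> covered M u" and wu: "w u = 5" and uV: "u \<in> V"
    and ob: "objective V w M = objective V w M0" and uC: "u = v \<or> covered M0 u"
    and cv: "\<forall>x. x \<noteq> u \<longrightarrow> (covered M x \<longleftrightarrow> (x = v \<or> covered M0 x))" using step.IH by auto
  let ?M' = "insert {u,b} (M - {{b,a}})"
  have vM': "validm E q ?M'" using flip_valid(1)[OF g vM nuc step.hyps(2,3,4)] .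
  have cov': "covered ?M' x \<longleftrightarrow> (x = u \<or> (covered M x \<and> x \<noteq> a))" for x
    using flip_valid(2)[OF g vM nuc step.hyps(2,3,4)] .
  have au: "a \<noteq> u" and aV: "a \<in> V" using flip_valid(3,6)[OF g vM nuc step.hyps(2,3,4)] by auto
  have ca: "covered M a" using step.hyps(4) unfolding covered_def by auto
  have obj': "objective V w ?M' = objective V w M + w u - w a"
    using objective_flip[OF finV cov' uV aV nuc ca] .
  have "objective V w ?M' \<le> objective V w M0" using opt[OF vM'] .
  hence "w a \<ge> 5" using obj' ob wu by auto
  hence wa: "w a = 5" using whi[OF aV] by auto
  have obj2: "objective V w ?M' = objective V w M0" using obj' ob wu wa by auto
  have nca: "\<not> covered ?M' a" using cov' au by auto
  have aC: "a = v \<or> covered M0 a" using cv ca au by auto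
  have cv': "\<forall>x. x \<noteq> a \<longrightarrow> (covered ?M' x \<longleftrightarrow> (x = v \<or> covered M0 x))"
  proof (intro allI impI)
    fix x assume xa: "x \<noteq> a"
    show "covered ?M' x \<longleftrightarrow> (x = v \<or> covered M0 x)"
    proof (cases "x = u")
      case True thus ?thesis using cov' uC by auto
    next
      case False thus ?thesis using cov' cv xa by auto
    qed
  qed
  show ?case using vM' aV nca wa obj2 aC cv' by blast
qed

definition Uset :: "'v set" where "Uset = {u. \<exists>M. reach M u}"

lemma nbr_covered:
  assumes r: "reach M u" and ub: "{u,b} \<in> E" "0 < q {u,b}"
  shows "covered M b"
proof (rule ccontr)
  assume nb: "\<not> covered M b"
  have vM: "validm E q M" and nuc: "\<not> covered M u" and wu: "w u = 5" and uV: "u \<in> V"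
    and ob: "objective V w M = objective V w M0" using reach_inv[OF r] by auto
  have vM'': "validm E q (insert {u,b} M)" using add_valid(1)[OF g vM nuc nb ub] .
  have cov: "covered (insert {u,b} M) x \<longleftrightarrow> (x = u \<or> x = b \<or> covered M x)" for x
    using add_valid(2)[OF g vM nuc nb ub] .
  have bV: "b \<in> V" using edge_V[OF g ub(1)] by auto
  have ubn: "u \<noteq> b" using edge_ne[OF g ub(1)] .
  have "objective V w (insert {u,b} M) = objective V w M + w u + w b"
    using objective_add[OF finV cov uV bV nuc nb ubn] .
  moreover have "objective V w (insert {u,b} M) \<le> objective V w M0" using opt[OF vM''] .
  ultimately show False using ob wlo[OF bV] wu by auto
qed

lemma nbr_partner:
  assumes r: "reach M u" and ub: "{u,b} \<in> E" "0 < q {u,b}"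
  shows "\<exists>a. {b,a} \<in> M \<and> a \<in> Uset"
proof -
  have vM: "validm E q M" using reach_inv[OF r] by auto
  hence mM: "matching E M" unfolding validm_def by auto
  obtain a where ba: "{b,a} \<in> M" using covered_partner[OF g mM nbr_covered[OF r ub]] by metis
  have "reach (insert {u,b} (M - {{b,a}})) a" using reach.step[OF r ub ba] .
  hence "a \<in> Uset" unfolding Uset_def by auto
  thus ?thesis using ba by auto
qed

lemma partner_inv:
  assumes "reach M u"
  shows "\<forall>b. b \<notin> Uset \<longrightarrow> ((\<exists>x. {b,x} \<in> M \<and> x \<in> Uset) \<longleftrightarrow> (\<exists>y. {b,y} \<in> M0 \<and> y \<in> Uset))"
  using assms
proof (induction rule: reach.induct)
  case base show ?case by auto
next
  case (step M u b' a)
  have uU: "u \<in> Uset" using step.hyps(1) unfolding Uset_def by auto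
  have aU: "a \<in> Uset" using reach.step[OF step.hyps] unfolding Uset_def by auto
  show ?case
  proof (intro allI impI)
    fix b assume bU: "b \<notin> Uset"
    have "(\<exists>x. {b,x} \<in> insert {u,b'} (M - {{b',a}}) \<and> x \<in> Uset) \<longleftrightarrow> (\<exists>x. {b,x} \<in> M \<and> x \<in> Uset)"
    proof (cases "b = b'")
      case True
      have "{b,u} \<in> insert {u,b'} (M - {{b',a}})" using True by (auto simp: insert_commute)
      moreover have "{b,a} \<in> M" using True step.hyps(4) by auto
      ultimately show ?thesis using uU aU by blast
    next
      case False
      have bu: "b \<noteq> u" "b \<noteq> a" using bU uU aU by auto
      have "{b,x} \<in> insert {u,b'} (M - {{b',a}}) \<longleftrightarrow> {b,x} \<in> M" for x
      proof -
        have "{b,x} \<noteq> {u,b'}" using bu False by (auto simp: doubleton_eq_iff)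
        moreover have "{b,x} \<noteq> {b',a}" using bu False by (auto simp: doubleton_eq_iff)
        ultimately show ?thesis by auto
      qed
      thus ?thesis by auto
    qed
    thus "(\<exists>x. {b,x} \<in> insert {u,b'} (M - {{b',a}}) \<and> x \<in> Uset) \<longleftrightarrow> (\<exists>y. {b,y} \<in> M0 \<and> y \<in> Uset)"
      using step.IH bU by auto
  qed
qed

end



lemma dcount:
  assumes "finite E" "finite S"
  shows "(\<Sum>x\<in>S. node_queue E q x) = (\<Sum>l\<in>E. q l * card (l \<inter> S))"
proof -
  have nq: "node_queue E q x = (\<Sum>l\<in>E. if x \<in> l then q l else 0)" for x
    unfolding node_queue_def links_at_def using assms(1) by (simp add: sum.inter_filter)
  have "(\<Sum>x\<in>S. node_queue E q x) = (\<Sum>x\<in>S. \<Sum>l\<in>E. if x \<in> l then q l else 0)"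
    using nq by simp
  also have "\<dots> = (\<Sum>l\<in>E. \<Sum>x\<in>S. if x \<in> l then q l else 0)" by (rule sum.swap)
  also have "\<dots> = (\<Sum>l\<in>E. q l * card (l \<inter> S))"
  proof (rule sum.cong[OF refl])
    fix l
    have "(\<Sum>x\<in>S. if x \<in> l then q l else 0) = (\<Sum>x\<in>{x\<in>S. x \<in> l}. q l)"
      by (rule sum.inter_filter[OF assms(2), symmetric])
    also have "\<dots> = card {x\<in>S. x \<in> l} * q l" by simp
    also have "{x\<in>S. x \<in> l} = l \<inter> S" by auto
    finally show "(\<Sum>x\<in>S. if x \<in> l then q l else 0) = q l * card (l \<inter> S)" by simp
  qed
  finally show ?thesis .
qed

context badsetup
begin

lemma Uset_indep:
  assumes uU: "u \<in> Uset" and u'U: "u' \<in> Uset" and uu'E: "{u,u'} \<in> E" and uu'q: "0 < q {u,u'}"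
  shows False
proof -
  obtain A where rA: "reach A u" using uU unfolding Uset_def by auto
  obtain B where rB: "reach B u'" using u'U unfolding Uset_def by auto
  note iA = reach_inv[OF rA] and iB = reach_inv[OF rB]
  have vA: "validm E q A" and vB: "validm E q B" using iA iB by auto
  have mA: "matching E A" and mB: "matching E B" using vA vB unfolding validm_def by auto
  have posA: "\<And>l. l \<in> A \<Longrightarrow> l \<in> E \<and> 0 < q l" using vA unfolding validm_def matching_def by auto
  have posB: "\<And>l. l \<in> B \<Longrightarrow> l \<in> E \<and> 0 < q l" using vB unfolding validm_def matching_def by auto
  have uu': "u \<noteq> u'" using edge_ne[OF g uu'E] .
  have nuA: "\<not> covered A u" and nuB: "\<not> covered B u'" using iA iB by auto
  have cBu: "covered B u" using iA iB uu' by auto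
  have eqv: "\<forall>x. x \<noteq> u \<longrightarrow> x \<noteq> u' \<longrightarrow> (covered A x \<longleftrightarrow> covered B x)" using iA iB by auto
  obtain k :: nat and c :: "nat \<Rightarrow> 'v" where ck: "0 < k" "c 0 = u" "c (2*k) = u'" "inj_on c {..2*k}"
    "\<forall>i<k. {c (2*i), c (2*i+1)} \<in> B - A" "\<forall>i<k. {c (2*i+1), c (2*i+2)} \<in> A - B"
    using alt_path_aux[OF g mB nuB mA uu' nuA cBu eqv refl] by blast
  have injc: "c i \<noteq> c j" if "i \<le> 2*k" "j \<le> 2*k" "i \<noteq> j" for i j
    using ck(4) that unfolding inj_on_def by auto
  have ev: "i \<le> k \<Longrightarrow> \<exists>N. reach N (c (2*i)) \<and> (\<forall>j. i \<le> j \<longrightarrow> j < k \<longrightarrow> {c (2*j+1), c (2*j+2)} \<in> N)" for i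
  proof (induction i)
    case 0
    show ?case using rA ck(2) ck(6) by (intro exI[of _ A]) auto
  next
    case (Suc i)
    then obtain N where rN: "reach N (c (2*i))" and hN: "\<forall>j. i \<le> j \<longrightarrow> j < k \<longrightarrow> {c (2*j+1), c (2*j+2)} \<in> N"
      by auto
    have ik: "i < k" using Suc.prems by auto
    have e1: "{c (2*i), c (2*i+1)} \<in> E" "0 < q {c (2*i), c (2*i+1)}" using posB ck(5) ik by auto
    have e2: "{c (2*i+1), c (2*i+2)} \<in> N" using hN ik by auto
    have rN': "reach (insert {c (2*i), c (2*i+1)} (N - {{c (2*i+1), c (2*i+2)}})) (c (2*i+2))"
      using reach.step[OF rN e1 e2] .
    have keep: "{c (2*j+1), c (2*j+2)} \<in> insert {c (2*i), c (2*i+1)} (N - {{c (2*i+1), c (2*i+2)}})"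
      if "Suc i \<le> j" "j < k" for j
    proof -
      have "c (2*j+1) \<noteq> c (2*i+1)" "c (2*j+1) \<noteq> c (2*i+2)" using injc that ik by auto
      hence "{c (2*j+1), c (2*j+2)} \<noteq> {c (2*i+1), c (2*i+2)}" by (auto simp: doubleton_eq_iff)
      moreover have "{c (2*j+1), c (2*j+2)} \<in> N" using hN that by auto
      ultimately show ?thesis by auto
    qed
    have "c (2 * Suc i) = c (2*i+2)" by simp
    thus ?case using rN' keep by (intro exI[of _ "insert {c (2*i), c (2*i+1)} (N - {{c (2*i+1), c (2*i+2)}})"]) auto
  qed
  have od: "i < k \<Longrightarrow> \<exists>N. reach N (c (2*i+1)) \<and> (\<forall>j. i < j \<longrightarrow> j < k \<longrightarrow> {c (2*j), c (2*j+1)} \<in> N)" for i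
  proof (induction i)
    case 0
    have e1: "{c (2*k), c 0} \<in> E" "0 < q {c (2*k), c 0}" using uu'E uu'q ck(2,3) by (auto simp: insert_commute)
    have e2: "{c 0, c 1} \<in> B" using ck(5) 0 by force
    have rN': "reach (insert {c (2*k), c 0} (B - {{c 0, c 1}})) (c 1)" using reach.step[OF rB[folded ck(3)] e1 e2] .
    have keep: "{c (2*j), c (2*j+1)} \<in> insert {c (2*k), c 0} (B - {{c 0, c 1}})" if "0 < j" "j < k" for j
    proof -
      have "c (2*j) \<noteq> c 0" "c (2*j) \<noteq> c 1" using injc that by auto
      hence "{c (2*j), c (2*j+1)} \<noteq> {c 0, c 1}" by (auto simp: doubleton_eq_iff)
      moreover have "{c (2*j), c (2*j+1)} \<in> B" using ck(5) that by auto
      ultimately show ?thesis by auto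
    qed
    show ?case using rN' keep by (intro exI[of _ "insert {c (2*k), c 0} (B - {{c 0, c 1}})"]) auto
  next
    case (Suc i)
    then obtain N where rN: "reach N (c (2*i+1))" and hN: "\<forall>j. i < j \<longrightarrow> j < k \<longrightarrow> {c (2*j), c (2*j+1)} \<in> N"
      by auto
    have ik: "Suc i < k" using Suc.prems by auto
    have e1: "{c (2*i+1), c (2*i+2)} \<in> E" "0 < q {c (2*i+1), c (2*i+2)}" using posA ck(6) ik by auto
    have "{c (2*Suc i), c (2*Suc i+1)} \<in> N" using hN ik by auto
    hence e2: "{c (2*i+2), c (2*i+3)} \<in> N" by (simp add: numeral_eq_Suc)
    have rN': "reach (insert {c (2*i+1), c (2*i+2)} (N - {{c (2*i+2), c (2*i+3)}})) (c (2*i+3))"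
      using reach.step[OF rN e1 e2] .
    have keep: "{c (2*j), c (2*j+1)} \<in> insert {c (2*i+1), c (2*i+2)} (N - {{c (2*i+2), c (2*i+3)}})"
      if "Suc i < j" "j < k" for j
    proof -
      have "c (2*j) \<noteq> c (2*i+2)" "c (2*j) \<noteq> c (2*i+3)" using injc that ik by auto
      hence "{c (2*j), c (2*j+1)} \<noteq> {c (2*i+2), c (2*i+3)}" by (auto simp: doubleton_eq_iff)
      moreover have "{c (2*j), c (2*j+1)} \<in> N" using hN that by auto
      ultimately show ?thesis by auto
    qed
    have eq3: "2 * Suc i + 1 = 2*i + 3" by simp
    have "c (2 * Suc i + 1) = c (2*i+3)" by (simp only: eq3)
    thus ?case using rN' keep by (intro exI[of _ "insert {c (2*i+1), c (2*i+2)} (N - {{c (2*i+2), c (2*i+3)}})"]) auto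
  qed
  have all5: "c j \<in> V \<and> w (c j) = 5" if "j \<le> 2*k" for j
  proof (cases "even j")
    case True
    then obtain i where i: "j = 2*i" by (auto elim: evenE)
    hence "i \<le> k" using that by auto
    then obtain N where "reach N (c (2*i))" using ev by blast
    thus ?thesis using reach_inv i by blast
  next
    case False
    then obtain i where i: "j = 2*i+1" by (auto elim: oddE)
    hence "i < k" using that by auto
    then obtain N where "reach N (c (2*i+1))" using od by blast
    thus ?thesis using reach_inv i by blast
  qed
  have lk: "{c j, c (Suc j)} \<in> E \<and> 0 < q {c j, c (Suc j)}" if "j < 2*k" for j
  proof (cases "even j")
    case True
    then obtain i where i: "j = 2*i" by (auto elim: evenE)
    hence "i < k" using that by auto
    thus ?thesis using posB ck(5) i by auto
  next
    case False
    then obtain i where i: "j = 2*i+1" by (auto elim: oddE)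
    hence "i < k" using that by auto
    hence "{c (2*i+1), c (2*i+2)} \<in> E \<and> 0 < q {c (2*i+1), c (2*i+2)}" using posA ck(6) by auto
    moreover have "Suc j = 2*i+2" using i by simp
    ultimately show ?thesis using i by simp
  qed
  have colp: "j \<le> 2*k \<Longrightarrow> col (c j) = (if even j then col (c 0) else \<not> col (c 0))" for j
  proof (induction j)
    case 0 show ?case by simp
  next
    case (Suc j)
    have jk: "j < 2*k" using Suc.prems by auto
    have "col (c j) \<noteq> col (c (Suc j))"
      using colr[of "c j" "c (Suc j)"] all5[of j] all5[of "Suc j"] lk[OF jk] jk Suc.prems by auto
    thus ?case using Suc.IH jk by auto
  qed
  have "col (c (2*k)) = col (c 0)" using colp[of "2*k"] by simp
  moreover have "col u \<noteq> col u'"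
    using colr[of u u'] all5[of 0] all5[of "2*k"] ck(2,3) uu'E uu'q by auto
  ultimately show False using ck(2,3) by auto
qed

lemma contra: False
proof -
  define U where "U = Uset"
  have UV: "U \<subseteq> V" unfolding U_def Uset_def using reach_inv by blast
  have finU: "finite U" using finite_subset[OF UV finV] .
  have vU: "v \<in> U" unfolding U_def Uset_def using reach.base by auto
  define F where "F = {b\<in>V. b \<notin> U \<and> (\<exists>u\<in>U. {u,b} \<in> E \<and> 0 < q {u,b})}"
  have finF: "finite F" unfolding F_def using finV by auto
  have partF: "\<exists>y. {b,y} \<in> M0 \<and> y \<in> U" if bF: "b \<in> F" for b
  proof -
    obtain u where uU: "u \<in> U" and ub: "{u,b} \<in> E" "0 < q {u,b}" and bU: "b \<notin> U"
      using bF unfolding F_def by blast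
    obtain M where r: "reach M u" using uU unfolding U_def Uset_def by auto
    obtain a where "{b,a} \<in> M" "a \<in> Uset" using nbr_partner[OF r ub] by auto
    thus ?thesis using partner_inv[OF r] bU unfolding U_def by blast
  qed
  define gF where "gF b = (SOME y. {b,y} \<in> M0 \<and> y \<in> U)" for b
  have gFp: "{b, gF b} \<in> M0 \<and> gF b \<in> U" if "b \<in> F" for b
    unfolding gF_def using someI_ex[OF partF[OF that]] .
  have mM0: "matching E M0" using vM0 unfolding validm_def by auto
  have injg: "inj_on gF F"
  proof (rule inj_onI)
    fix b b' assume b: "b \<in> F" and b': "b' \<in> F" and eq: "gF b = gF b'"
    have "{gF b, b} \<in> M0" "{gF b, b'} \<in> M0" using gFp[OF b] gFp[OF b'] eq by (auto simp: insert_commute)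
    thus "b = b'" using matching_partner_unique[OF g mM0] by metis
  qed
  have gsub: "gF ` F \<subseteq> U - {v}"
  proof
    fix y assume "y \<in> gF ` F"
    then obtain b where b: "b \<in> F" "y = gF b" by auto
    have "{b,y} \<in> M0" "y \<in> U" using gFp[OF b(1)] b(2) by auto
    moreover have "y \<noteq> v" using nv \<open>{b,y} \<in> M0\<close> unfolding covered_def by auto
    ultimately show "y \<in> U - {v}" by auto
  qed
  have "card F = card (gF ` F)" using card_image[OF injg] by simp
  also have "\<dots> \<le> card (U - {v})" using card_mono[OF _ gsub] finU by auto
  also have "\<dots> = card U - 1" using vU finU by simp
  finally have cardF: "card F \<le> card U - 1" .
  have cU1: "1 \<le> card U" using vU finU by (metis card_0_eq empty_iff less_one not_le)
  have finE: "finite E" using graph_finite_E[OF g] .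
  have sU: "(\<Sum>x\<in>U. node_queue E q x) = card U * D"
  proof -
    have "(\<Sum>x\<in>U. node_queue E q x) = (\<Sum>x\<in>U. D)"
    proof (rule sum.cong[OF refl])
      fix x assume "x \<in> U"
      then obtain M where r: "reach M x" unfolding U_def Uset_def by auto
      show "node_queue E q x = D" using Tq reach_inv[OF r] by auto
    qed
    thus ?thesis by simp
  qed
  have sF: "(\<Sum>x\<in>F. node_queue E q x) \<le> card F * D"
  proof -
    have "(\<Sum>x\<in>F. node_queue E q x) \<le> (\<Sum>x\<in>F. D)"
      by (rule sum_mono) (use Dmax F_def in auto)
    thus ?thesis by simp
  qed
  have pw: "q l * card (l \<inter> U) \<le> q l * card (l \<inter> F)" if lE: "l \<in> E" for l
  proof -
    obtain x y where xy: "l = {x,y}" "x \<noteq> y" "x \<in> V" "y \<in> V" using graph_edge[OF g lE] by blast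
    show ?thesis
    proof (cases "q l = 0")
      case True thus ?thesis by simp
    next
      case False
      hence ql: "0 < q l" by simp
      show ?thesis
      proof (cases "x \<in> U")
        case True
        have yU: "y \<notin> U"
        proof
          assume "y \<in> U"
          thus False using Uset_indep[of x y] True lE ql xy(1) unfolding U_def by auto
        qed
        have yF: "y \<in> F" unfolding F_def using xy True yU lE ql by auto
        have "l \<inter> U = {x}" using xy True yU by auto
        moreover have "y \<in> l \<inter> F" using yF xy by auto
        hence "1 \<le> card (l \<inter> F)" using xy(1) by (metis One_nat_def Suc_leI card_gt_0_iff empty_iff finite.emptyI finite.insertI finite_Int)
        ultimately show ?thesis by simp
      next
        case False
        show ?thesis
        proof (cases "y \<in> U")
          case True
          have xF: "x \<in> F" unfolding F_def using xy True \<open>x \<notin> U\<close> lE ql by (auto simp: insert_commute)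
          have "l \<inter> U = {y}" using xy True \<open>x \<notin> U\<close> by auto
          moreover have "x \<in> l \<inter> F" using xF xy by auto
          hence "1 \<le> card (l \<inter> F)" using xy(1) by (metis One_nat_def Suc_leI card_gt_0_iff empty_iff finite.emptyI finite.insertI finite_Int)
          ultimately show ?thesis by simp
        next
          case False
          hence "l \<inter> U = {}" using xy \<open>x \<notin> U\<close> by auto
          thus ?thesis by simp
        qed
      qed
    qed
  qed
  have "card U * D = (\<Sum>l\<in>E. q l * card (l \<inter> U))" using sU dcount[OF finE finU] by simp
  also have "\<dots> \<le> (\<Sum>l\<in>E. q l * card (l \<inter> F))" by (rule sum_mono) (rule pw)
  also have "\<dots> = (\<Sum>x\<in>F. node_queue E q x)" using dcount[OF finE finF] by simp
  also have "\<dots> \<le> card F * D" using sF .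
  also have "\<dots> \<le> (card U - 1) * D" using cardF by simp
  also have "\<dots> < card U * D" using cU1 Dpos by (intro mult_less_mono1) auto
  finally show False by simp
qed

end

context optsetup
begin

theorem covers:
  assumes "v \<in> V" "w v = 5"
  shows "covered M0 v"
proof (rule ccontr)
  assume "\<not> covered M0 v"
  hence "badsetup V E q w M0 col D v"
    unfolding badsetup_def badsetup_axioms_def using optsetup_axioms assms by auto
  thus False by (rule badsetup.contra)
qed

end



lemma mq_ge:
  assumes g: "graph V E" and "i \<in> V"
  shows "node_queue E q i \<le> max_queue V E q"
  unfolding max_queue_def using graph_finite_V[OF g] assms(2) by (intro Max_ge) auto

lemma mq_le:
  assumes g: "graph V E" and h: "\<And>i. i \<in> V \<Longrightarrow> node_queue E q i \<le> m"
  shows "max_queue V E q \<le> m"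
  unfolding max_queue_def using graph_finite_V[OF g] h by (intro Max.boundedI) auto

lemma run_valid: "lcnsb_run V E Q sched \<Longrightarrow> validm E (Q k) (sched k)"
  unfolding lcnsb_run_def validm_def by blast

lemma run_opt: "lcnsb_run V E Q sched \<Longrightarrow> validm E (Q k) M \<Longrightarrow>
    objective V (lcnsb_weight V E Q sched k) M \<le> objective V (lcnsb_weight V E Q sched k) (sched k)"
  unfolding lcnsb_run_def validm_def by blast

lemma run_upd: "lcnsb_run V E Q sched \<Longrightarrow> Q (Suc k) l = (if l \<in> sched k then Q k l - 1 else Q k l)"
  unfolding lcnsb_run_def by blast

lemma run_mono: "lcnsb_run V E Q sched \<Longrightarrow> Q (Suc k) l \<le> Q k l"
  using run_upd[of V E Q sched k l] by auto

lemma nq_step: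
  assumes g: "graph V E" and run: "lcnsb_run V E Q sched"
  shows "node_queue E (Q (Suc k)) i + (if covered (sched k) i then 1 else 0) = node_queue E (Q k) i"
proof -
  have vM: "validm E (Q k) (sched k)" using run_valid[OF run] .
  hence mM: "matching E (sched k)" and pos: "\<And>l. l \<in> sched k \<Longrightarrow> 0 < Q k l"
    unfolding validm_def by auto
  have finL: "finite (links_at E i)" unfolding links_at_def using graph_finite_E[OF g] by auto
  show ?thesis
  proof (cases "covered (sched k) i")
    case False
    have "node_queue E (Q (Suc k)) i = node_queue E (Q k) i"
      unfolding node_queue_def
    proof (rule sum.cong[OF refl])
      fix l assume "l \<in> links_at E i"
      hence "l \<notin> sched k" using False unfolding links_at_def covered_def by auto
      thus "Q (Suc k) l = Q k l" using run_upd[OF run] by auto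
    qed
    thus ?thesis using False by simp
  next
    case True
    then obtain l0 where l0: "l0 \<in> sched k" "i \<in> l0" unfolding covered_def by auto
    have l0L: "l0 \<in> links_at E i" using l0 matching_sub[OF mM l0(1)] unfolding links_at_def by auto
    have oth: "l \<notin> sched k" if "l \<in> links_at E i" "l \<noteq> l0" for l
    proof
      assume "l \<in> sched k"
      hence "l \<inter> l0 = {}" using matching_disj[OF mM _ l0(1) that(2)] by auto
      thus False using that(1) l0(2) unfolding links_at_def by auto
    qed
    have "node_queue E (Q (Suc k)) i = Q (Suc k) l0 + (\<Sum>l\<in>links_at E i - {l0}. Q (Suc k) l)"
      unfolding node_queue_def using sum.remove[OF finL l0L] .
    also have "(\<Sum>l\<in>links_at E i - {l0}. Q (Suc k) l) = (\<Sum>l\<in>links_at E i - {l0}. Q k l)"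
    proof (rule sum.cong[OF refl])
      fix l assume "l \<in> links_at E i - {l0}"
      thus "Q (Suc k) l = Q k l" using oth run_upd[OF run] by auto
    qed
    also have "Q (Suc k) l0 = Q k l0 - 1" using run_upd[OF run] l0(1) by auto
    finally have "node_queue E (Q (Suc k)) i + 1 = Q k l0 + (\<Sum>l\<in>links_at E i - {l0}. Q k l)"
      using pos[OF l0(1)] by simp
    also have "\<dots> = node_queue E (Q k) i"
      unfolding node_queue_def by (rule sum.remove[OF finL l0L, symmetric])
    finally show ?thesis using True by simp
  qed
qed

lemma Rind_nat: "Rind sched (int k) i = (if covered (sched k) i then 1 else 0)"
  unfolding Rind_def by simp

lemma Rind_01: "Rind sched k i = 0 \<or> Rind sched k i = 1"
  unfolding Rind_def by auto

lemma Uind_01: "Uind sched k i = 0 \<or> Uind sched k i = 1"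
  unfolding Uind_def using Rind_01[of sched "int k - 1" i] Rind_01[of sched "int k - 2" i] by auto

lemma weight_bounds:
  "1 \<le> lcnsb_weight V E Q sched k i \<and> lcnsb_weight V E Q sched k i \<le> 5"
  unfolding lcnsb_weight_def Let_def using Uind_01[of sched k i] by auto

lemma weight5:
  "lcnsb_weight V E Q sched k i = 5 \<longleftrightarrow>
     node_queue E (Q k) i = max_queue V E (Q k) \<and> Uind sched k i = 0"
  unfolding lcnsb_weight_def Let_def using Uind_01[of sched k i] by auto

lemma elite:
  assumes g: "graph V E" and run: "lcnsb_run V E Q sched"
    and x: "x \<in> V" "\<not> covered (sched k) x" and y: "y \<in> V" "\<not> covered (sched k) y"
    and xy: "{x,y} \<in> E" "0 < Q k {x,y}"
  shows False
proof -
  have vM: "validm E (Q k) (sched k)" using run_valid[OF run] .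
  let ?w = "lcnsb_weight V E Q sched k"
  have v2: "validm E (Q k) (insert {x,y} (sched k))" using add_valid(1)[OF g vM x(2) y(2) xy] .
  have cov: "covered (insert {x,y} (sched k)) z \<longleftrightarrow> (z = x \<or> z = y \<or> covered (sched k) z)" for z
    using add_valid(2)[OF g vM x(2) y(2) xy] .
  have "objective V ?w (insert {x,y} (sched k)) = objective V ?w (sched k) + ?w x + ?w y"
    using objective_add[OF graph_finite_V[OF g] cov x(1) y(1) x(2) y(2) edge_ne[OF g xy(1)]] .
  moreover have "objective V ?w (insert {x,y} (sched k)) \<le> objective V ?w (sched k)"
    using run_opt[OF run v2] .
  moreover have "1 \<le> ?w x" using weight_bounds[of V E Q sched k x] by auto
  moreover have "1 \<le> ?w y" using weight_bounds[of V E Q sched k y] by auto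
  ultimately show False by auto
qed

lemma slot_cover:
  fixes col :: "'v \<Rightarrow> bool"
  assumes g: "graph V E" and run: "lcnsb_run V E Q sched" and D1: "1 \<le> max_queue V E (Q k)"
    and colr: "\<And>x y. x \<in> V \<Longrightarrow> y \<in> V \<Longrightarrow> lcnsb_weight V E Q sched k x = 5 \<Longrightarrow>
        lcnsb_weight V E Q sched k y = 5 \<Longrightarrow> {x,y} \<in> E \<Longrightarrow> 0 < Q k {x,y} \<Longrightarrow> col x \<noteq> col y"
    and vV: "v \<in> V" and wv: "lcnsb_weight V E Q sched k v = 5"
  shows "covered (sched k) v"
proof -
  have os: "optsetup V E (Q k) (lcnsb_weight V E Q sched k) (sched k) col (max_queue V E (Q k))"
  proof unfold_locales
    show "graph V E" by (rule g)
    show "validm E (Q k) (sched k)" by (rule run_valid[OF run])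
    show "1 \<le> max_queue V E (Q k)" by (rule D1)
    fix M assume "validm E (Q k) M"
    thus "objective V (lcnsb_weight V E Q sched k) M \<le> objective V (lcnsb_weight V E Q sched k) (sched k)"
      by (rule run_opt[OF run])
  next
    fix i assume "i \<in> V"
    show "1 \<le> lcnsb_weight V E Q sched k i" using weight_bounds[of V E Q sched k i] by auto
    show "lcnsb_weight V E Q sched k i \<le> 5" using weight_bounds[of V E Q sched k i] by auto
    show "node_queue E (Q k) i \<le> max_queue V E (Q k)" by (rule mq_ge[OF g \<open>i \<in> V\<close>])
    assume "lcnsb_weight V E Q sched k i = 5"
    thus "node_queue E (Q k) i = max_queue V E (Q k)" using weight5[of V E Q sched k i] by blast
  next
    fix x y assume "x \<in> V" "y \<in> V" "lcnsb_weight V E Q sched k x = 5"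
      "lcnsb_weight V E Q sched k y = 5" "{x,y} \<in> E" "0 < Q k {x,y}"
    thus "col x \<noteq> col y" by (rule colr)
  qed
  show ?thesis by (rule optsetup.covers[OF os vV wv])
qed



theorem proposition2:
  fixes V :: "'v set" and E :: "'v set set"
    and Q :: "nat \<Rightarrow> 'v set \<Rightarrow> nat" and sched :: "nat \<Rightarrow> 'v set set" and k' :: nat
  assumes "graph V E"
    and "lcnsb_run V E Q sched"
    and "max_queue V E (Q (3 * k')) \<ge> 2"
  shows "max_queue V E (Q (3 * k' + 3)) \<le> max_queue V E (Q (3 * k')) - 2"
proof -
  note g = assms(1) and run = assms(2)
  define p where "p = 3 * k'"
  define \<Delta> where "\<Delta> = max_queue V E (Q p)"
  have D2: "2 \<le> \<Delta>" using assms(3) unfolding \<Delta>_def p_def .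
  have step: "node_queue E (Q (Suc k)) i + (if covered (sched k) i then 1 else 0) = node_queue E (Q k) i"
    for k i using nq_step[OF g run] .
  have le0: "node_queue E (Q p) i \<le> \<Delta>" if "i \<in> V" for i
    unfolding \<Delta>_def using mq_ge[OF g that] .
  have mono_mq: "max_queue V E (Q (Suc k)) \<le> max_queue V E (Q k)" for k
  proof (rule mq_le[OF g])
    fix i assume "i \<in> V"
    have "node_queue E (Q (Suc k)) i \<le> node_queue E (Q k) i" using step[of k i] by (auto split: if_splits)
    also have "\<dots> \<le> max_queue V E (Q k)" using mq_ge[OF g \<open>i \<in> V\<close>] .
    finally show "node_queue E (Q (Suc k)) i \<le> max_queue V E (Q k)" .
  qed
  have m1: "Suc p mod 3 = 1" unfolding p_def by presburger
  have m2: "Suc (Suc p) mod 3 = 2" unfolding p_def by presburger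
  have U1: "Uind sched (Suc p) i = (if covered (sched p) i then 1 else 0)" for i
    unfolding Uind_def using m1 Rind_nat[of sched p i] by simp
  have U2: "Uind sched (Suc (Suc p)) i =
      (if covered (sched (Suc p)) i then 1 else 0) * (if covered (sched p) i then 1 else 0)" for i
  proof -
    have "int (Suc (Suc p)) - 1 = int (Suc p)" "int (Suc (Suc p)) - 2 = int p" by simp_all
    thus ?thesis unfolding Uind_def using m2 Rind_nat[of sched p i] Rind_nat[of sched "Suc p" i] by simp
  qed
  have s1: "node_queue E (Q (Suc (Suc p))) i \<le> \<Delta> - 1" if iV: "i \<in> V" for i
  proof (rule ccontr)
    assume "\<not> node_queue E (Q (Suc (Suc p))) i \<le> \<Delta> - 1"
    hence ge: "\<Delta> \<le> node_queue E (Q (Suc (Suc p))) i" by auto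
    have st1: "node_queue E (Q (Suc (Suc p))) i + (if covered (sched (Suc p)) i then 1 else 0)
        = node_queue E (Q (Suc p)) i" using step .
    have st0: "node_queue E (Q (Suc p)) i + (if covered (sched p) i then 1 else 0)
        = node_queue E (Q p) i" using step .
    have lp: "node_queue E (Q p) i \<le> \<Delta>" using le0[OF iV] .
    have nc1: "\<not> covered (sched (Suc p)) i" and nc0: "\<not> covered (sched p) i"
      and eq1: "node_queue E (Q (Suc p)) i = \<Delta>"
      using st1 st0 lp ge by (auto split: if_splits)
    have mq1: "max_queue V E (Q (Suc p)) = \<Delta>"
      using mq_ge[OF g iV, of "Q (Suc p)"] mono_mq[of p] eq1 unfolding \<Delta>_def by auto
    have w5: "lcnsb_weight V E Q sched (Suc p) i = 5"
      using weight5[of V E Q sched "Suc p" i] eq1 mq1 U1[of i] nc0 by simp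
    have "covered (sched (Suc p)) i"
    proof (rule slot_cover[OF g run _ _ iV w5, where col = "\<lambda>_. True"])
      show "1 \<le> max_queue V E (Q (Suc p))" using mq1 D2 by simp
    next
      fix x y assume xV: "x \<in> V" and yV: "y \<in> V" and wx: "lcnsb_weight V E Q sched (Suc p) x = 5"
        and wy: "lcnsb_weight V E Q sched (Suc p) y = 5" and xyE: "{x,y} \<in> E" and xyq: "0 < Q (Suc p) {x,y}"
      have "\<not> covered (sched p) x" using wx weight5[of V E Q sched "Suc p" x] U1[of x] by (auto split: if_splits)
      moreover have "\<not> covered (sched p) y" using wy weight5[of V E Q sched "Suc p" y] U1[of y] by (auto split: if_splits)
      moreover have "0 < Q p {x,y}" using xyq run_mono[OF run, of p "{x,y}"] by simp
      ultimately have False using elite[OF g run xV _ yV _ xyE] by blast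
      thus "(\<lambda>_. True) x \<noteq> (\<lambda>_. True) y" by simp
    qed
    thus False using nc1 by simp
  qed
  have mq2: "max_queue V E (Q (Suc (Suc p))) \<le> \<Delta> - 1" using mq_le[OF g s1] .
  have s2: "node_queue E (Q (Suc (Suc (Suc p)))) i \<le> \<Delta> - 2" if iV: "i \<in> V" for i
  proof -
    have st2: "node_queue E (Q (Suc (Suc (Suc p)))) i + (if covered (sched (Suc (Suc p))) i then 1 else 0)
        = node_queue E (Q (Suc (Suc p))) i" using step .
    have a: "node_queue E (Q (Suc (Suc p))) i \<le> \<Delta> - 1" using s1[OF iV] .
    show ?thesis
    proof (cases "node_queue E (Q (Suc (Suc p))) i \<le> \<Delta> - 2")
      case True thus ?thesis using st2 by (auto split: if_splits)
    next
      case False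
      hence eq2: "node_queue E (Q (Suc (Suc p))) i = \<Delta> - 1" using a D2 by auto
      have mqe: "max_queue V E (Q (Suc (Suc p))) = \<Delta> - 1"
        using mq_ge[OF g iV, of "Q (Suc (Suc p))"] mq2 eq2 by auto
      show ?thesis
      proof (cases "covered (sched (Suc (Suc p))) i")
        case True thus ?thesis using st2 eq2 by auto
      next
        case nc2: False
        show ?thesis
        proof (cases "covered (sched (Suc p)) i \<and> covered (sched p) i")
          case True
          have st1: "node_queue E (Q (Suc (Suc p))) i + (if covered (sched (Suc p)) i then 1 else 0)
              = node_queue E (Q (Suc p)) i" using step .
          have st0: "node_queue E (Q (Suc p)) i + (if covered (sched p) i then 1 else 0)
              = node_queue E (Q p) i" using step .
          have "node_queue E (Q (Suc (Suc p))) i + 2 \<le> \<Delta>" using st1 st0 True le0[OF iV] by auto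
          hence False using eq2 D2 by auto
          thus ?thesis ..
        next
          case False
          have w5: "lcnsb_weight V E Q sched (Suc (Suc p)) i = 5"
            using weight5[of V E Q sched "Suc (Suc p)" i] eq2 mqe U2[of i] False by auto
          have "covered (sched (Suc (Suc p))) i"
          proof (rule slot_cover[OF g run _ _ iV w5, where col = "\<lambda>x. covered (sched (Suc p)) x"])
            show "1 \<le> max_queue V E (Q (Suc (Suc p)))" using mqe D2 by simp
          next
            fix x y assume xV: "x \<in> V" and yV: "y \<in> V"
              and wx: "lcnsb_weight V E Q sched (Suc (Suc p)) x = 5"
              and wy: "lcnsb_weight V E Q sched (Suc (Suc p)) y = 5" and xyE: "{x,y} \<in> E"
              and xyq: "0 < Q (Suc (Suc p)) {x,y}"
            have ux: "\<not> (covered (sched (Suc p)) x \<and> covered (sched p) x)"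
              using wx weight5[of V E Q sched "Suc (Suc p)" x] U2[of x] by (auto split: if_splits)
            have uy: "\<not> (covered (sched (Suc p)) y \<and> covered (sched p) y)"
              using wy weight5[of V E Q sched "Suc (Suc p)" y] U2[of y] by (auto split: if_splits)
            have q1: "0 < Q (Suc p) {x,y}" using xyq run_mono[OF run, of "Suc p" "{x,y}"] by simp
            have q0: "0 < Q p {x,y}" using q1 run_mono[OF run, of p "{x,y}"] by simp
            show "covered (sched (Suc p)) x \<noteq> covered (sched (Suc p)) y"
            proof
              assume same: "covered (sched (Suc p)) x = covered (sched (Suc p)) y"
              show False
              proof (cases "covered (sched (Suc p)) x")
                case True
                hence "\<not> covered (sched p) x" "\<not> covered (sched p) y" using same ux uy by auto
                thus False using elite[OF g run xV _ yV _ xyE q0] by blast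
              next
                case False
                hence "\<not> covered (sched (Suc p)) x" "\<not> covered (sched (Suc p)) y" using same by auto
                thus False using elite[OF g run xV _ yV _ xyE q1] by blast
              qed
            qed
          qed
          hence False using nc2 by simp
          thus ?thesis ..
        qed
      qed
    qed
  qed
  have fin: "max_queue V E (Q (Suc (Suc (Suc p)))) \<le> \<Delta> - 2" using mq_le[OF g s2] .
  have eq: "3 * k' + 3 = Suc (Suc (Suc (3 * k')))" by simp
  show ?thesis using fin unfolding \<Delta>_def p_def eq .
qed


end
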